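(* Let $G$ be a graph with $N$ vertices, let $Q^\dagger$ be an operator with $[\sum_i s_i^\dagger s_i,Q^\dagger]=cQ^\dagger$ for a constant $c$, let $L$ be the largest integer with $|Q^L\rangle\neq0$, and let $\alpha,\beta,\gamma$ be functions from the positive integers to the positive reals such that $Q^\dagger$ satisfies properties (P.1) with $\alpha$, (P.2) with $\beta$, and (P.3) with $\gamma$. Let $H$ be a $k$-local operator of range at most $R$ (with $k,R\ge1$) such that $H|Q^p\rangle=E_p|Q^p\rangle$ for all $p\in\{0,\dots,L\}$, and suppose $N>\beta(\alpha(R))\,\gamma(k)$. Then $E_p=\Omega+\omega p$ for all $p\in\{0,\dots,L\}$, where $\Omega=\Omega'$ and $\omega=c\,\omega'$ with $\Omega',\omega'$ the constants provided by (P.1) for $H$.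
   Context: System of $N$ qubits on the vertices of a graph $G$ with local basis $|0\rangle,|1\rangle$. For each vertex $i$, $s_i^\dagger$ acts on $i$ as $s^\dagger|0\rangle=|1\rangle$, $s^\dagger|1\rangle=0$, $s_i=(s_i^\dagger)^\dagger$; $|\overline 0\rangle=|0\rangle^{\otimes N}$. Distances are graph distances; for a vertex set $X$, $\mathrm{diam}(X)=1+\max_{i,j\in X}(\text{distance})$; an operator is supported in $X$ if it acts as identity outside $X$. Every operator has a unique expansion in normal-ordered strings $s^\dagger_{j_1}\cdots s^\dagger_{j_n}s_{k_1}\cdots s_{k_m}$ (the $j$'s pairwise distinct, the $k$'s pairwise distinct); a string has range $R$ where $R$ is the smallest positive integer with all pairwise distances between its sites $<R$; an operator has range at most $R$ if all its strings with nonzero coefficient do, and is $k$-local if each such string involves at most $k$ sites. Operators need not be Hermitian. Tower: $|Q^p\rangle=(Q^\dagger)^p|\overline 0\rangle$ (unnormalized), so $|Q^0\rangle=|\overline 0\rangle$, $|Q\rangle=|Q^1\rangle$. Properties: (P.1) with $\alpha$: for every positive integer $R$ and every operator $H$ of range at most $R$ with $H|Q^0\rangle\propto|Q^0\rangle$ and $H|Q^1\rangle\propto|Q^1\rangle$, there exist constants $\Omega',\omega'$ and operators $h_X$, indexed by vertex sets $X$ with $\mathrm{diam}(X)\le\alpha(R)$, each supported in $X$ with $h_X|Q\rangle=h_X|\overline 0\rangle=0$, such that $H=\Omega' I+\omega'\sum_i s_i^\dagger s_i+\sum_{X:\mathrm{diam}(X)\le\alpha(R)}h_X$. (P.2) with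 $\beta$: for every positive integer $R_{\max}$ and every family of operators $h_X$ (indexed by vertex sets $X$ with $\mathrm{diam}(X)\le R_{\max}$, each supported in $X$, with $h_X|Q\rangle=h_X|\overline 0\rangle=0$), if $\left(\sum_X h_X\right)|Q^p\rangle=E'_p|Q^p\rangle$ for some $p\le\min(L,N/\beta(R_{\max}))$, then $E'_p=0$. (P.3) with $\gamma$: for every $k\ge1$ and every $k$-local operator $H$, if $H|Q^q\rangle=0$ for all $q\le\min(\gamma(k),L)$, then $H|Q^p\rangle=0$ for all $p\in\{0,\dots,L\}$. *)

theory Defs
  imports Complex_Main "HOL-Library.Extended_Nat"
begin

text \<open>The vertex set is the finite type 'v
  (so N = CARD('v)); the graph is given by an adjacency relation G.
  A computational basis state is identified with the set of vertices in state 1.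
  Operators are matrices indexed by basis states: A S T is the matrix element (S, T).\<close>

type_synonym 'v op = "'v set \<Rightarrow> 'v set \<Rightarrow> complex"
type_synonym 'v vec = "'v set \<Rightarrow> complex"

definition op_apply :: "'v::finite op \<Rightarrow> 'v vec \<Rightarrow> 'v vec" where
  "op_apply A \<psi> = (\<lambda>S. \<Sum>T\<in>UNIV. A S T * \<psi> T)"

definition op_mult :: "'v::finite op \<Rightarrow> 'v op \<Rightarrow> 'v op" where
  "op_mult A B = (\<lambda>S U. \<Sum>T\<in>UNIV. A S T * B T U)"

definition idop :: "'v op" where
  "idop = (\<lambda>S T. if S = T then 1 else 0)"

definition sdag :: "'v \<Rightarrow> 'v op" where
  "sdag i = (\<lambda>S T. if i \<notin> T \<and> S = insert i T then 1 else 0)"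

definition sann :: "'v \<Rightarrow> 'v op" where
  "sann i = (\<lambda>S T. if i \<in> T \<and> S = T - {i} then 1 else 0)"

definition numop :: "'v::finite op" where
  "numop = (\<lambda>S T. \<Sum>i\<in>UNIV. op_mult (sdag i) (sann i) S T)"

text \<open>Normal-ordered string s^dagger_{j in J} s_{k in K} (factors on distinct sites commute,
  so the string depends only on the sets J and K); written out as a matrix.\<close>
definition nstring :: "'v set \<Rightarrow> 'v set \<Rightarrow> 'v op" where
  "nstring J K = (\<lambda>S T. if K \<subseteq> T \<and> J \<inter> (T - K) = {} \<and> S = J \<union> (T - K) then 1 else 0)"

text \<open>Acts as identity outside X.\<close>
definition supported_in :: "'v set \<Rightarrow> 'v op \<Rightarrow> bool" where
  "supported_in X A \<longleftrightarrow>
     (\<forall>S T. S - X \<noteq> T - X \<longrightarrow> A S T = 0) \<and>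
     (\<forall>S T S' T'. S \<inter> X = S' \<inter> X \<and> T \<inter> X = T' \<inter> X \<and> S - X = T - X \<and> S' - X = T' - X
        \<longrightarrow> A S T = A S' T')"

text \<open>Graph distance (infinite if not connected).\<close>
definition gdist :: "('v \<Rightarrow> 'v \<Rightarrow> bool) \<Rightarrow> 'v \<Rightarrow> 'v \<Rightarrow> enat" where
  "gdist G i j = (INF n\<in>{n. (G ^^ n) i j}. enat n)"

definition diam :: "('v \<Rightarrow> 'v \<Rightarrow> bool) \<Rightarrow> 'v set \<Rightarrow> enat" where
  "diam G X = 1 + (SUP i\<in>X. SUP j\<in>X. gdist G i j)"

definition diam_le :: "('v \<Rightarrow> 'v \<Rightarrow> bool) \<Rightarrow> 'v set \<Rightarrow> real \<Rightarrow> bool" where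
  "diam_le G X r \<longleftrightarrow> (\<exists>n. diam G X = enat n \<and> real n \<le> r)"

text \<open>Range at most R / k-locality, via the (unique) normal-ordered expansion.\<close>
definition range_le :: "('v::finite \<Rightarrow> 'v \<Rightarrow> bool) \<Rightarrow> nat \<Rightarrow> 'v op \<Rightarrow> bool" where
  "range_le G R A \<longleftrightarrow> (\<exists>coef :: 'v set \<times> 'v set \<Rightarrow> complex.
      A = (\<lambda>S T. \<Sum>JK\<in>UNIV. coef JK * nstring (fst JK) (snd JK) S T) \<and>
      (\<forall>J K. coef (J, K) \<noteq> 0 \<longrightarrow> (\<forall>i\<in>J \<union> K. \<forall>j\<in>J \<union> K. gdist G i j < enat R)))"

definition k_local :: "nat \<Rightarrow> 'v::finite op \<Rightarrow> bool" where
  "k_local k A \<longleftrightarrow> (\<exists>coef :: 'v set \<times> 'v set \<Rightarrow> complex.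
      A = (\<lambda>S T. \<Sum>JK\<in>UNIV. coef JK * nstring (fst JK) (snd JK) S T) \<and>
      (\<forall>J K. coef (J, K) \<noteq> 0 \<longrightarrow> card (J \<union> K) \<le> k))"

definition vac :: "'v vec" where
  "vac = (\<lambda>S. if S = {} then 1 else 0)"

text \<open>|Q^p> = (Q^dagger)^p |0...0>, Qd being the operator Q^dagger.\<close>
definition qvec :: "'v::finite op \<Rightarrow> nat \<Rightarrow> 'v vec" where
  "qvec Qd p = (op_apply Qd ^^ p) vac"

definition proportional :: "'v::finite op \<Rightarrow> 'v vec \<Rightarrow> bool" where
  "proportional H v \<longleftrightarrow> (\<exists>a::complex. op_apply H v = (\<lambda>S. a * v S))"

definition P1_decomp :: "('v::finite \<Rightarrow> 'v \<Rightarrow> bool) \<Rightarrow> 'v op \<Rightarrow> (nat \<Rightarrow> real) \<Rightarrow> nat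
    \<Rightarrow> 'v op \<Rightarrow> complex \<Rightarrow> complex \<Rightarrow> ('v set \<Rightarrow> 'v op) \<Rightarrow> bool" where
  "P1_decomp G Qd \<alpha> R H \<Omega> \<omega> h \<longleftrightarrow>
     (\<forall>X. diam_le G X (\<alpha> R) \<longrightarrow> supported_in X (h X) \<and>
          op_apply (h X) (qvec Qd 1) = (\<lambda>_. 0) \<and> op_apply (h X) vac = (\<lambda>_. 0)) \<and>
     H = (\<lambda>S T. \<Omega> * idop S T + \<omega> * numop S T + (\<Sum>X\<in>{X. diam_le G X (\<alpha> R)}. h X S T))"

definition prop_P1 :: "('v::finite \<Rightarrow> 'v \<Rightarrow> bool) \<Rightarrow> 'v op \<Rightarrow> (nat \<Rightarrow> real) \<Rightarrow> bool" where
  "prop_P1 G Qd \<alpha> \<longleftrightarrow> (\<forall>R::nat. R > 0 \<longrightarrow> (\<forall>H. range_le G R H \<and> proportional H (qvec Qd 0)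
      \<and> proportional H (qvec Qd 1) \<longrightarrow> (\<exists>\<Omega> \<omega> h. P1_decomp G Qd \<alpha> R H \<Omega> \<omega> h)))"

definition prop_P2 :: "('v::finite \<Rightarrow> 'v \<Rightarrow> bool) \<Rightarrow> 'v op \<Rightarrow> nat \<Rightarrow> (nat \<Rightarrow> real) \<Rightarrow> bool" where
  "prop_P2 G Qd L \<beta> \<longleftrightarrow> (\<forall>Rmax::nat. Rmax > 0 \<longrightarrow> (\<forall>h :: 'v set \<Rightarrow> 'v op.
      (\<forall>X. diam G X \<le> enat Rmax \<longrightarrow> supported_in X (h X) \<and>
          op_apply (h X) (qvec Qd 1) = (\<lambda>_. 0) \<and> op_apply (h X) vac = (\<lambda>_. 0)) \<longrightarrow>
      (\<forall>p E'. op_apply (\<lambda>S T. \<Sum>X\<in>{X. diam G X \<le> enat Rmax}. h X S T) (qvec Qd p)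
                 = (\<lambda>S. E' * qvec Qd p S)
              \<and> real p \<le> min (real L) (real (card (UNIV :: 'v set)) / \<beta> Rmax) \<longrightarrow> E' = 0)))"

definition prop_P3 :: "'v::finite op \<Rightarrow> nat \<Rightarrow> (nat \<Rightarrow> real) \<Rightarrow> bool" where
  "prop_P3 Qd L \<gamma> \<longleftrightarrow> (\<forall>k::nat. k \<ge> 1 \<longrightarrow> (\<forall>H. k_local k H \<and>
      (\<forall>q::nat. real q \<le> min (\<gamma> k) (real L) \<longrightarrow> op_apply H (qvec Qd q) = (\<lambda>_. 0)) \<longrightarrow>
      (\<forall>p\<le>L. op_apply H (qvec Qd p) = (\<lambda>_. 0))))"

end

theory Submission imports Defs begin

lemma op_apply_mult: "op_apply (op_mult A B) v = op_apply A (op_apply B v)"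
  unfolding op_apply_def op_mult_def
  by (auto simp: sum_distrib_left sum_distrib_right mult.assoc intro!: ext sum.swap[THEN trans])

lemma op_apply_zero: "op_apply A (\<lambda>_. 0) = (\<lambda>_. 0)"
  unfolding op_apply_def by simp

lemma op_apply_scale: "op_apply A (\<lambda>S. a * v S) = (\<lambda>S. a * op_apply A v S)"
  unfolding op_apply_def by (simp add: sum_distrib_left algebra_simps)

lemma op_apply_lin: "op_apply (\<lambda>S T. a * A S T + B S T) v = (\<lambda>S. a * op_apply A v S + op_apply B v S)"
  unfolding op_apply_def by (simp add: sum_distrib_left sum.distrib algebra_simps)

lemma mult_if_zero: "(if P then a else 0) * (b::complex) = (if P then a * b else 0)" by simp

lemma op_apply_lin3: "op_apply (\<lambda>S T. a * A S T + b * B S T + C S T) v = (\<lambda>S. a * op_apply A v S + (b * op_apply B v S + op_apply C v S))"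
  unfolding op_apply_def by (simp add: sum_distrib_left sum.distrib algebra_simps)

lemma op_apply_id: "op_apply idop v = v"
  unfolding op_apply_def idop_def by (rule ext) (simp add: mult_if_zero)

lemma sdag_sann: "op_mult (sdag i) (sann i) S T = (if i \<in> T \<and> S = T then 1 else 0)"
proof -
  have "op_mult (sdag i) (sann i) S T = (\<Sum>U\<in>UNIV. if U = T - {i} then (if i \<in> T \<and> S = T then 1 else 0) else 0)"
    unfolding op_mult_def sdag_def sann_def
    by (rule sum.cong) (auto simp: insert_absorb)
  also have "\<dots> = (if i \<in> T \<and> S = T then 1 else 0)" by simp
  finally show ?thesis .
qed

lemma numop_eq: "numop S T = (if S = T then of_nat (card T) else 0)"
  unfolding numop_def sdag_sann
  by (auto simp: sum.If_cases)

lemma numop_apply: "op_apply numop v = (\<lambda>S. of_nat (card S) * v S)"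
  unfolding op_apply_def numop_eq by (rule ext) (simp add: mult_if_zero)

lemma nstring_id: "nstring {} {} = idop"
  unfolding nstring_def idop_def by auto

lemma nstring_num: "nstring {i} {i} S T = (if i \<in> T \<and> S = T then 1 else 0)"
  unfolding nstring_def by auto

lemma numop_nstring: "numop S T = (\<Sum>i\<in>UNIV. nstring {i} {i} S T)"
  unfolding numop_def sdag_sann nstring_num ..

lemma k_local_shift:
  fixes H :: "'v::finite op"
  assumes "k_local k H" "k \<ge> 1"
  shows "k_local k (\<lambda>S T. H S T - a * idop S T - b * numop S T)"
proof -
  obtain coef where H: "H = (\<lambda>S T. \<Sum>JK\<in>UNIV. coef JK * nstring (fst JK) (snd JK) S T)"
    and C: "\<forall>J K. coef (J, K) \<noteq> 0 \<longrightarrow> card (J \<union> K) \<le> k"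
    using assms(1) unfolding k_local_def by blast
  define D where "D = range (\<lambda>i::'v. ({i},{i}))"
  define coef' where "coef' JK = coef JK - (if JK = ({},{}) then a else 0) - (if JK \<in> D then b else 0)" for JK
  have e1: "(\<Sum>JK\<in>UNIV. (if JK = ({},{}) then a else 0) * nstring (fst JK) (snd JK) S T) = a * idop S T" for S T :: "'v set"
  proof -
    have "(\<Sum>JK\<in>UNIV. (if JK = ({},{}) then a else 0) * nstring (fst JK) (snd JK) S T)
       = (\<Sum>JK\<in>UNIV. if JK = ({},{}) then a * nstring (fst JK) (snd JK) S T else 0)"
      by (rule sum.cong) auto
    also have "\<dots> = a * nstring {} {} S T" by (subst sum.delta) (auto intro: finite)
    finally show ?thesis by (simp add: nstring_id)
  qed
  have e2: "(\<Sum>JK\<in>UNIV. (if JK \<in> D then b else 0) * nstring (fst JK) (snd JK) S T) = b * numop S T" for S T :: "'v set"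
  proof -
    have "(\<Sum>JK\<in>UNIV. (if JK \<in> D then b else 0) * nstring (fst JK) (snd JK) S T)
        = (\<Sum>JK\<in>D. b * nstring (fst JK) (snd JK) S T)"
      by (simp add: mult_if_zero sum.If_cases Int_absorb1)
    also have "\<dots> = (\<Sum>i\<in>UNIV. b * nstring {i} {i} S T)"
      unfolding D_def by (subst sum.reindex) (auto simp: inj_on_def)
    also have "\<dots> = b * numop S T" by (simp add: numop_nstring sum_distrib_left)
    finally show ?thesis .
  qed
  have "(\<lambda>S T. H S T - a * idop S T - b * numop S T) = (\<lambda>S T. \<Sum>JK\<in>UNIV. coef' JK * nstring (fst JK) (snd JK) S T)"
  proof (intro ext)
    fix S T :: "'v set"
    have "(\<Sum>JK\<in>UNIV. coef' JK * nstring (fst JK) (snd JK) S T)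
      = (\<Sum>JK\<in>UNIV. coef JK * nstring (fst JK) (snd JK) S T)
        - (\<Sum>JK\<in>UNIV. (if JK = ({},{}) then a else 0) * nstring (fst JK) (snd JK) S T)
        - (\<Sum>JK\<in>UNIV. (if JK \<in> D then b else 0) * nstring (fst JK) (snd JK) S T)"
      unfolding coef'_def left_diff_distrib sum_subtractf ..
    then show "H S T - a * idop S T - b * numop S T = (\<Sum>JK\<in>UNIV. coef' JK * nstring (fst JK) (snd JK) S T)"
      unfolding e1 e2 H by simp
  qed
  moreover have "\<forall>J K. coef' (J, K) \<noteq> 0 \<longrightarrow> card (J \<union> K) \<le> k"
  proof (intro allI impI)
    fix J K assume "coef' (J, K) \<noteq> 0"
    then have "coef (J,K) \<noteq> 0 \<or> (J,K) = ({},{}) \<or> (J,K) \<in> D" unfolding coef'_def by (auto split: if_splits)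
    then show "card (J \<union> K) \<le> k" using C assms(2) unfolding D_def by auto
  qed
  ultimately show ?thesis unfolding k_local_def by blast
qed

lemma qvec_Suc: "qvec Qd (Suc p) = op_apply Qd (qvec Qd p)"
  unfolding qvec_def by simp

lemma numop_qvec:
  assumes "\<forall>S T. op_mult numop Qd S T - op_mult Qd numop S T = c * Qd S T"
  shows "op_apply numop (qvec Qd p) = (\<lambda>S. (c * of_nat p) * qvec Qd p S)"
proof (induction p)
  case 0
  show ?case by (auto simp: qvec_def numop_apply vac_def intro!: ext)
next
  case (Suc p)
  have m: "op_mult numop Qd = (\<lambda>S T. c * Qd S T + op_mult Qd numop S T)"
    using assms by (auto intro!: ext simp: algebra_simps)
  have "op_apply numop (qvec Qd (Suc p)) = op_apply (op_mult numop Qd) (qvec Qd p)"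
    by (simp add: qvec_Suc op_apply_mult)
  also have "\<dots> = (\<lambda>S. c * op_apply Qd (qvec Qd p) S + op_apply Qd (op_apply numop (qvec Qd p)) S)"
    unfolding m op_apply_lin op_apply_mult ..
  also have "\<dots> = (\<lambda>S. (c * of_nat (Suc p)) * qvec Qd (Suc p) S)"
    unfolding Suc op_apply_scale qvec_Suc by (auto intro!: ext simp: algebra_simps)
  finally show ?case .
qed

lemma qvec_nonzero:
  assumes "qvec Qd L \<noteq> (\<lambda>_. 0)" "p \<le> L"
  shows "qvec Qd p \<noteq> (\<lambda>_. 0)"
proof
  assume z: "qvec Qd p = (\<lambda>_. 0)"
  have "qvec Qd (p + n) = (\<lambda>_. 0)" for n
    by (induction n) (simp_all add: z qvec_Suc op_apply_zero)
  from this[of "L - p"] assms show False by simp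
qed

theorem theorem3:
  fixes G :: "'v::finite \<Rightarrow> 'v \<Rightarrow> bool"
    and Qd :: "'v op" and c :: complex and L :: nat
    and \<alpha> \<beta> \<gamma> :: "nat \<Rightarrow> real"
    and H :: "'v op" and E :: "nat \<Rightarrow> complex" and k R :: nat
  assumes "symp G" and "irreflp G"
    and "\<forall>S T. op_mult numop Qd S T - op_mult Qd numop S T = c * Qd S T"
    and "qvec Qd L \<noteq> (\<lambda>_. 0)" and "\<forall>p>L. qvec Qd p = (\<lambda>_. 0)"
    and "\<forall>n>0. \<alpha> n > 0" and "\<forall>n>0. \<beta> n > 0" and "\<forall>n>0. \<gamma> n > 0"
    and "prop_P1 G Qd \<alpha>" and "prop_P2 G Qd L \<beta>" and "prop_P3 Qd L \<gamma>"
    and "k \<ge> 1" and "R \<ge> 1" and "k_local k H" and "range_le G R H"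
    and "\<forall>p\<le>L. op_apply H (qvec Qd p) = (\<lambda>S. E p * qvec Qd p S)"
    and "real (card (UNIV :: 'v set)) > \<beta> (nat \<lceil>\<alpha> R\<rceil>) * \<gamma> k"
  shows "(\<exists>\<Omega> \<omega> h. P1_decomp G Qd \<alpha> R H \<Omega> \<omega> h) \<and>
         (\<forall>\<Omega> \<omega> h. P1_decomp G Qd \<alpha> R H \<Omega> \<omega> h \<longrightarrow>
            (\<forall>p\<le>L. E p = \<Omega> + c * \<omega> * of_nat p))"
proof -
  note A = assms
  have qv0: "qvec Qd 0 = vac" by (simp add: qvec_def)
  have Hq: "op_apply H (qvec Qd p) = (\<lambda>S. E p * qvec Qd p S)" if "p \<le> L" for p
    using A(16) that by blast
  have prop0: "proportional H (qvec Qd 0)" unfolding proportional_def using Hq[of 0] by blast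
  have prop1: "proportional H (qvec Qd 1)"
  proof (cases "1 \<le> L")
    case True then show ?thesis unfolding proportional_def using Hq[of 1] by blast
  next
    case False
    then have "qvec Qd 1 = (\<lambda>_. 0)" using A(5) by auto
    then show ?thesis unfolding proportional_def by (auto simp: op_apply_zero)
  qed
  have ex: "\<exists>\<Omega> \<omega> h. P1_decomp G Qd \<alpha> R H \<Omega> \<omega> h"
    using A(9) A(13) A(15) prop0 prop1 unfolding prop_P1_def by auto
  have main: "E p = \<Omega> + c * \<omega> * of_nat p" if D: "P1_decomp G Qd \<alpha> R H \<Omega> \<omega> h" and pL: "p \<le> L" for \<Omega> \<omega> h p
  proof -
    define Rm where "Rm = nat \<lceil>\<alpha> R\<rceil>"
    have aR: "\<alpha> R > 0" using A(6) A(13) by auto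
    have Rm0: "Rm > 0" unfolding Rm_def using aR by simp
    define h' where "h' X = (if diam_le G X (\<alpha> R) then h X else (\<lambda>S T. 0))" for X
    have sub: "{X. diam_le G X (\<alpha> R)} \<subseteq> {X. diam G X \<le> enat Rm}"
    proof
      fix X assume "X \<in> {X. diam_le G X (\<alpha> R)}"
      then obtain n where n: "diam G X = enat n" "real n \<le> \<alpha> R" unfolding diam_le_def by auto
      have "int n \<le> \<lceil>\<alpha> R\<rceil>" using n(2) ceiling_mono[OF n(2)] by simp
      then have "n \<le> Rm" unfolding Rm_def by linarith
      then show "X \<in> {X. diam G X \<le> enat Rm}" using n by simp
    qed
    define Hs where "Hs = (\<lambda>S T. \<Sum>X\<in>{X. diam_le G X (\<alpha> R)}. h X S T)"
    have Hdec: "H = (\<lambda>S T. \<Omega> * idop S T + \<omega> * numop S T + Hs S T)"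
      using D unfolding P1_decomp_def Hs_def by blast
    have hprops: "\<forall>X. diam_le G X (\<alpha> R) \<longrightarrow> supported_in X (h X) \<and>
          op_apply (h X) (qvec Qd 1) = (\<lambda>_. 0) \<and> op_apply (h X) vac = (\<lambda>_. 0)"
      using D unfolding P1_decomp_def by blast
    have zsupp: "supported_in X (\<lambda>S T. 0)" for X :: "'v set"
      unfolding supported_in_def by simp
    have zapp: "op_apply (\<lambda>S T. 0) v = (\<lambda>_. 0)" for v :: "'v vec"
      unfolding op_apply_def by simp
    have h'props: "\<forall>X. diam G X \<le> enat Rm \<longrightarrow> supported_in X (h' X) \<and>
          op_apply (h' X) (qvec Qd 1) = (\<lambda>_. 0) \<and> op_apply (h' X) vac = (\<lambda>_. 0)"
      using hprops zsupp zapp unfolding h'_def by auto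
    have sumeq: "(\<lambda>S T. \<Sum>X\<in>{X. diam G X \<le> enat Rm}. h' X S T) = Hs"
    proof (intro ext)
      fix S T
      show "(\<Sum>X\<in>{X. diam G X \<le> enat Rm}. h' X S T) = Hs S T"
        unfolding Hs_def
        by (rule sum.mono_neutral_cong_right[OF _ sub]) (auto simp: h'_def)
    qed
    have Hsq: "op_apply Hs (qvec Qd q) = (\<lambda>S. (E q - \<Omega> - c * \<omega> * of_nat q) * qvec Qd q S)"
      if "q \<le> L" for q
    proof -
      have "op_apply H (qvec Qd q) = (\<lambda>S. \<Omega> * qvec Qd q S + (\<omega> * ((c * of_nat q) * qvec Qd q S) + op_apply Hs (qvec Qd q) S))"
        unfolding Hdec op_apply_lin3 op_apply_id numop_qvec[OF A(3)] ..
      then show ?thesis using Hq[OF that] by (auto intro!: ext simp: algebra_simps fun_eq_iff)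
    qed
    have HsH: "Hs = (\<lambda>S T. H S T - \<Omega> * idop S T - \<omega> * numop S T)"
      unfolding Hdec by (auto intro!: ext)
    have kl: "k_local k Hs" unfolding HsH by (rule k_local_shift[OF A(14) A(12)])
    have bpos: "\<beta> Rm > 0" using A(7) Rm0 by auto
    have low: "op_apply Hs (qvec Qd q) = (\<lambda>_. 0)" if q: "real q \<le> min (\<gamma> k) (real L)" for q
    proof -
      have qL: "q \<le> L" using q by simp
      have "real q \<le> \<gamma> k" using q by simp
      then have "real q * \<beta> Rm \<le> \<beta> Rm * \<gamma> k" using bpos by (simp add: mult.commute)
      also have "\<dots> < real (card (UNIV :: 'v set))" using A(17) unfolding Rm_def .
      finally have "real q < real (card (UNIV :: 'v set)) / \<beta> Rm" using bpos by (simp add: field_simps)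
      then have qle: "real q \<le> min (real L) (real (card (UNIV :: 'v set)) / \<beta> Rm)" using qL by simp
      have P2: "\<And>p E'. op_apply (\<lambda>S T. \<Sum>X\<in>{X. diam G X \<le> enat Rm}. h' X S T) (qvec Qd p)
                 = (\<lambda>S. E' * qvec Qd p S)
              \<and> real p \<le> min (real L) (real (card (UNIV :: 'v set)) / \<beta> Rm) \<Longrightarrow> E' = 0"
        using A(10) Rm0 h'props unfolding prop_P2_def by blast
      have "E q - \<Omega> - c * \<omega> * of_nat q = 0"
        by (rule P2[of q]) (use qle Hsq[OF qL] sumeq in simp)
      then show ?thesis using Hsq[OF qL] by simp
    qed
    have "op_apply Hs (qvec Qd p) = (\<lambda>_. 0)"
      using A(11) A(12) kl low pL unfolding prop_P3_def by blast
    then have "\<forall>S. (E p - \<Omega> - c * \<omega> * of_nat p) * qvec Qd p S = 0" using Hsq[OF pL] by (simp add: fun_eq_iff)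
    moreover obtain S where "qvec Qd p S \<noteq> 0" using qvec_nonzero[OF A(4) pL] by auto
    ultimately have "E p - \<Omega> - c * \<omega> * of_nat p = 0" by auto
    then show ?thesis by (simp add: algebra_simps)
  qed
  show ?thesis using ex main by blast
qed

end
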